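(* Let $f,g$ satisfy the standing assumptions below and suppose $\beta\ge\max\{\frac{8M_fQ_g}{\mu^3},\frac{4M_fQ_gL_g}{\mu^{3.5}}\}$. Then for any $(x,y)\in\mathbb{R}^n\times\mathbb{R}^p$ and any $w\in\hat{\mathcal{D}}_p(x,y)$, $\sup_{z\in\mathcal{D}_h(x,y)}\langle z,w\rangle\ge\min\{\frac{\mu^2}{4L_g^2},\frac\mu4\}\|w\|^2$.
   Context: Standing assumptions. (A1) Constants $M_f,\mu,L_g,Q_g>0$ exist such that: $f:\mathbb{R}^n\times\mathbb{R}^p\to\mathbb{R}$ is $M_f$-Lipschitz; $g$ is twice differentiable with $\nabla^2_{yy}g\succeq\mu I_p$; $\nabla g$ is $L_g$-Lipschitz; $\nabla^2_{yy}g,\nabla^2_{xy}g$ are $Q_g$-Lipschitz; $\nabla^2_{yy}g$ is continuously differentiable ($\nabla^2_{xy}g\in\mathbb{R}^{n\times p}$ has entries $\partial^2g/\partial x_i\partial y_j$). (A2) $f$ is a potential function of a conservative field $\mathcal{D}_f$ with compact convex values of norm at most $M_f$. Notation (all at $(x,y)$): $H=\nabla^2_{yy}g$; $\mathcal{A}(x,y):=y-H^{-1}\nabla_yg$; $\nabla^3_{xyy}g(x,y)[d]:=\lim_{t\to0}\frac1t(\nabla^2_{xy}g(x,y+td)-\nabla^2_{xy}g(x,y))$, $\nabla^3_{yyy}g(x,y)[d]:=\lim_{t\to0}\frac1t(\nabla^2_{yy}g(x,y+td)-\nabla^2_{yy}g(x,y))$; $J_{A,x}:=-\nabla^2_{xy}gH^{-1}+\nabla^3_{xyy}g[H^{-1}\nabla_yg]H^{-1}$,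 $J_{A,y}:=\nabla^3_{yyy}g[H^{-1}\nabla_yg]H^{-1}$; $\mathcal{D}_h(x,y):=\{(d_x+J_{A,x}d_y+\beta\nabla^2_{xy}g\nabla_yg,\ J_{A,y}d_y+\beta H\nabla_yg):(d_x,d_y)\in\mathcal{D}_f(x,\mathcal{A}(x,y))\}$; $W(x,y):=[I_n,\ -\nabla^2_{xy}g(x,y)H^{-1}]\in\mathbb{R}^{n\times(n+p)}$; $\hat{\mathcal{D}}_p(x,y):=\{W(x,y)^\top W(x,y)d+(0,\beta\nabla_yg(x,y)):d\in\mathcal{D}_f(x,\mathcal{A}(x,y))\}$. *)

theory Defs
  imports "HOL-Analysis.Analysis"
begin

definition abs_cont_curve :: "(real \<Rightarrow> 'a::real_normed_vector) \<Rightarrow> bool" where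
  "abs_cont_curve \<gamma> \<longleftrightarrow>
     (\<forall>\<epsilon>>0. \<exists>\<delta>>0. \<forall>(I::nat set) a b.
        finite I \<and> (\<forall>k\<in>I. 0 \<le> a k \<and> a k \<le> b k \<and> b k \<le> 1)
        \<and> (\<forall>k\<in>I. \<forall>l\<in>I. k \<noteq> l \<longrightarrow> b k \<le> a l \<or> b l \<le> a k)
        \<and> (\<Sum>k\<in>I. b k - a k) < \<delta>
        \<longrightarrow> (\<Sum>k\<in>I. norm (\<gamma> (b k) - \<gamma> (a k))) < \<epsilon>)"

definition field_curve_integral ::
  "('a::euclidean_space \<Rightarrow> 'a set) \<Rightarrow> (real \<Rightarrow> 'a) \<Rightarrow> real" where
  "field_curve_integral D \<gamma> =
     (LBINT t:{0..1}. Sup ((\<lambda>v. inner (vector_derivative \<gamma> (at t)) v) ` D (\<gamma> t)))"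

definition conservative_field :: "('a::euclidean_space \<Rightarrow> 'a set) \<Rightarrow> bool" where
  "conservative_field D \<longleftrightarrow>
     closed {(z, v). v \<in> D z}
     \<and> (\<forall>z. D z \<noteq> {} \<and> compact (D z))
     \<and> (\<forall>\<gamma>. abs_cont_curve \<gamma> \<and> \<gamma> 0 = \<gamma> 1 \<longrightarrow> field_curve_integral D \<gamma> = 0)"

definition potential_of :: "('a::euclidean_space \<Rightarrow> real) \<Rightarrow> ('a \<Rightarrow> 'a set) \<Rightarrow> bool" where
  "potential_of f D \<longleftrightarrow> conservative_field D \<and>
     (\<forall>\<gamma>. abs_cont_curve \<gamma> \<longrightarrow> f (\<gamma> 1) - f (\<gamma> 0) = field_curve_integral D \<gamma>)"

type_synonym ('n, 'p) pt = "(real^'n) \<times> (real^'p)"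

definition gradx :: "(('n::finite, 'p::finite) pt \<Rightarrow> real) \<Rightarrow> ('n,'p) pt \<Rightarrow> real^'n" where
  "gradx g z = (\<chi> i. frechet_derivative g (at z) (axis i 1, 0))"

definition grady :: "(('n::finite, 'p::finite) pt \<Rightarrow> real) \<Rightarrow> ('n,'p) pt \<Rightarrow> real^'p" where
  "grady g z = (\<chi> j. frechet_derivative g (at z) (0, axis j 1))"

definition Hyy :: "(('n::finite, 'p::finite) pt \<Rightarrow> real) \<Rightarrow> ('n,'p) pt \<Rightarrow> real^'p^'p" where
  "Hyy g z = (\<chi> i j. frechet_derivative (\<lambda>u. grady g u $ j) (at z) (0, axis i 1))"

definition Hxy :: "(('n::finite, 'p::finite) pt \<Rightarrow> real) \<Rightarrow> ('n,'p) pt \<Rightarrow> real^'p^'n" where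
  "Hxy g z = (\<chi> i j. frechet_derivative (\<lambda>u. grady g u $ j) (at z) (axis i 1, 0))"

definition D3xyy :: "(('n::finite, 'p::finite) pt \<Rightarrow> real) \<Rightarrow> real^'n \<Rightarrow> real^'p \<Rightarrow> real^'p \<Rightarrow> real^'p^'n" where
  "D3xyy g x y d = Lim (at 0) (\<lambda>t. (1 / t) *\<^sub>R (Hxy g (x, y + t *\<^sub>R d) - Hxy g (x, y)))"

definition D3yyy :: "(('n::finite, 'p::finite) pt \<Rightarrow> real) \<Rightarrow> real^'n \<Rightarrow> real^'p \<Rightarrow> real^'p \<Rightarrow> real^'p^'p" where
  "D3yyy g x y d = Lim (at 0) (\<lambda>t. (1 / t) *\<^sub>R (Hyy g (x, y + t *\<^sub>R d) - Hyy g (x, y)))"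

definition Amap :: "(('n::finite, 'p::finite) pt \<Rightarrow> real) \<Rightarrow> real^'n \<Rightarrow> real^'p \<Rightarrow> real^'p" where
  "Amap g x y = y - matrix_inv (Hyy g (x, y)) *v grady g (x, y)"

definition JAx :: "(('n::finite, 'p::finite) pt \<Rightarrow> real) \<Rightarrow> real^'n \<Rightarrow> real^'p \<Rightarrow> real^'p^'n" where
  "JAx g x y = (let Hi = matrix_inv (Hyy g (x, y)) in
     - (Hxy g (x, y) ** Hi) + D3xyy g x y (Hi *v grady g (x, y)) ** Hi)"

definition JAy :: "(('n::finite, 'p::finite) pt \<Rightarrow> real) \<Rightarrow> real^'n \<Rightarrow> real^'p \<Rightarrow> real^'p^'p" where
  "JAy g x y = (let Hi = matrix_inv (Hyy g (x, y)) in
     D3yyy g x y (Hi *v grady g (x, y)) ** Hi)"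

definition Dh :: "(('n::finite, 'p::finite) pt \<Rightarrow> real) \<Rightarrow> (('n,'p) pt \<Rightarrow> ('n,'p) pt set)
                  \<Rightarrow> real \<Rightarrow> real^'n \<Rightarrow> real^'p \<Rightarrow> ('n,'p) pt set" where
  "Dh g Df \<beta> x y =
     (\<lambda>(dx, dy). (dx + JAx g x y *v dy + \<beta> *\<^sub>R (Hxy g (x, y) *v grady g (x, y)),
                  JAy g x y *v dy + \<beta> *\<^sub>R (Hyy g (x, y) *v grady g (x, y))))
     ` Df (x, Amap g x y)"

definition Wmap :: "(('n::finite, 'p::finite) pt \<Rightarrow> real) \<Rightarrow> real^'n \<Rightarrow> real^'p \<Rightarrow> ('n,'p) pt \<Rightarrow> real^'n" where
  "Wmap g x y d = fst d - (Hxy g (x, y) ** matrix_inv (Hyy g (x, y))) *v snd d"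

definition WTmap :: "(('n::finite, 'p::finite) pt \<Rightarrow> real) \<Rightarrow> real^'n \<Rightarrow> real^'p \<Rightarrow> real^'n \<Rightarrow> ('n,'p) pt" where
  "WTmap g x y v = (v, - (transpose (Hxy g (x, y) ** matrix_inv (Hyy g (x, y))) *v v))"

definition Dp_hat :: "(('n::finite, 'p::finite) pt \<Rightarrow> real) \<Rightarrow> (('n,'p) pt \<Rightarrow> ('n,'p) pt set)
                  \<Rightarrow> real \<Rightarrow> real^'n \<Rightarrow> real^'p \<Rightarrow> ('n,'p) pt set" where
  "Dp_hat g Df \<beta> x y =
     (\<lambda>d. WTmap g x y (Wmap g x y d) + (0, \<beta> *\<^sub>R grady g (x, y))) ` Df (x, Amap g x y)"

end

theory Submission
  imports Defs
begin


lemma mvi: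
  fixes f f' :: "real \<Rightarrow> real"
  assumes d: "\<And>x. \<bar>x\<bar> < r \<Longrightarrow> DERIV f x :> f' x"
    and bd: "\<And>x. \<bar>x\<bar> < r \<Longrightarrow> \<bar>f' x\<bar> \<le> B"
    and a: "\<bar>a\<bar> < r" and b: "\<bar>b\<bar> < r"
  shows "\<bar>f b - f a\<bar> \<le> B * \<bar>b - a\<bar>"
proof -
  have main: "\<bar>f q - f p\<bar> \<le> B * \<bar>q - p\<bar>" if pq: "p < q" "\<bar>p\<bar> < r" "\<bar>q\<bar> < r" for p q
  proof -
    have "\<And>x. p \<le> x \<Longrightarrow> x \<le> q \<Longrightarrow> DERIV f x :> f' x"
      using d pq by (intro d) auto
    from MVT2[OF pq(1) this] obtain z where z: "p < z" "z < q" "f q - f p = (q - p) * f' z" by blast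
    have "\<bar>z\<bar> < r" using z pq by auto
    hence "\<bar>f' z\<bar> \<le> B" by (rule bd)
    thus ?thesis using z(3) pq(1) by (simp add: abs_mult mult.commute mult_right_mono)
  qed
  show ?thesis
  proof (cases a b rule: linorder_cases)
    case less then show ?thesis using main a b by auto
  next
    case equal
    have "0 \<le> B" using bd[OF a] by (meson abs_ge_zero order_trans)
    then show ?thesis using equal by simp
  next
    case greater then show ?thesis using main[of b a] a b by (simp add: abs_minus_commute)
  qed
qed

lemma tendsto_mvmul:
  fixes q :: "real \<Rightarrow> real^'p^'n"
  assumes "(q \<longlongrightarrow> L) F"
  shows "((\<lambda>t. q t *v w) \<longlongrightarrow> L *v w) F"
  unfolding matrix_vector_mult_def
  by (intro vec_tendstoI) (auto intro!: tendsto_intros assms)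

lemma D3_bound:
  fixes M :: "real \<Rightarrow> real^'p^'n"
  assumes conv: "((\<lambda>t. (1/t) *\<^sub>R (M t - M0)) \<longlongrightarrow> Lm) (at 0)"
    and lip: "\<And>t. onorm (\<lambda>v. (M t - M0) *v v) \<le> Q * (\<bar>t\<bar> * c)"
  shows "norm (Lim (at 0) (\<lambda>t. (1/t) *\<^sub>R (M t - M0)) *v w) \<le> Q * c * norm w"
proof -
  have L: "Lim (at 0) (\<lambda>t. (1/t) *\<^sub>R (M t - M0)) = Lm"
    by (rule tendsto_Lim) (auto simp: conv)
  have t: "((\<lambda>t. ((1/t) *\<^sub>R (M t - M0)) *v w) \<longlongrightarrow> Lm *v w) (at 0)"
    by (rule tendsto_mvmul[OF conv])
  have ev: "\<forall>\<^sub>F t in at (0::real). norm (((1/t) *\<^sub>R (M t - M0)) *v w) \<le> Q * c * norm w"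
  proof (rule eventually_at_topological[THEN iffD2], intro exI[of _ UNIV] conjI ballI impI)
    fix t :: real assume "t \<noteq> 0"
    have "((1/t) *\<^sub>R (M t - M0)) *v w = (1/t) *\<^sub>R ((M t - M0) *v w)"
      by (simp add: scaleR_matrix_vector_assoc)
    hence "norm (((1/t) *\<^sub>R (M t - M0)) *v w) = norm ((M t - M0) *v w) / \<bar>t\<bar>" by simp
    also have "norm ((M t - M0) *v w) \<le> onorm (\<lambda>v. (M t - M0) *v v) * norm w"
      by (rule onorm) simp
    also have "\<dots> \<le> Q * (\<bar>t\<bar> * c) * norm w" by (rule mult_right_mono[OF lip]) simp
    finally show "norm (((1/t) *\<^sub>R (M t - M0)) *v w) \<le> Q * c * norm w"
      using \<open>t \<noteq> 0\<close> by (simp add: divide_right_mono field_simps)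
  qed auto
  show ?thesis using Lim_norm_ubound[OF _ t ev] L by simp
qed



lemma final_arith:
  fixes a \<gamma> \<mu> Lg Qg Mf \<beta> P nw :: real
  assumes a: "a \<ge> 0" and g: "\<gamma> \<ge> 0" and mu: "\<mu> > 0" and Lg: "Lg > 0" and Qg: "Qg > 0" and Mf: "Mf > 0"
    and muL: "\<mu> \<le> Lg"
    and b1: "\<beta> \<ge> 8*Mf*Qg/\<mu>^3" and b2: "\<beta> \<ge> 4*Mf*Qg*Lg/(\<mu>^3 * sqrt \<mu>)"
    and P: "P \<ge> a\<^sup>2 - Qg*(\<gamma>/\<mu>)*(Mf/\<mu>)*a - Qg*(\<gamma>/\<mu>)*(Mf/\<mu>)*(Lg*a/\<mu>)
               - \<beta>*(Qg*(\<gamma>/\<mu>)*(Mf/\<mu>)*\<gamma>) + \<beta>\<^sup>2*(\<mu>*\<gamma>\<^sup>2)"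
    and nw: "nw \<le> a\<^sup>2 + (Lg*a/\<mu> + \<beta>*\<gamma>)\<^sup>2"
  shows "P \<ge> min (\<mu>\<^sup>2/(4*Lg\<^sup>2)) (\<mu>/4) * nw"
proof -
  define K where "K = Qg*Mf*Lg/\<mu>^3"
  define c where "c = min (\<mu>\<^sup>2/(4*Lg\<^sup>2)) (\<mu>/4)"
  have bpos: "\<beta> > 0" using b1 mu Mf Qg by (smt (verit) divide_pos_pos mult_pos_pos zero_less_power)
  have Kpos: "K \<ge> 0" unfolding K_def using mu Lg Qg Mf by simp
  have e1: "Qg*(\<gamma>/\<mu>)*(Mf/\<mu>)*a \<le> K*\<gamma>*a"
  proof -
    have "Qg*(\<gamma>/\<mu>)*(Mf/\<mu>)*a = (Qg*Mf*\<gamma>*a) * (1/\<mu>^2)" by (simp add: power2_eq_square field_simps)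
    also have "\<dots> \<le> (Qg*Mf*\<gamma>*a) * (Lg/\<mu>^3)"
      using mu muL by (intro mult_left_mono) (auto simp: field_simps power3_eq_cube power2_eq_square a g Qg Mf less_imp_le)
    also have "\<dots> = K*\<gamma>*a" unfolding K_def by (simp add: field_simps)
    finally show ?thesis .
  qed
  have e2: "Qg*(\<gamma>/\<mu>)*(Mf/\<mu>)*(Lg*a/\<mu>) = K*\<gamma>*a" unfolding K_def by (simp add: power3_eq_cube field_simps)
  have e3: "\<beta>*(Qg*(\<gamma>/\<mu>)*(Mf/\<mu>)*\<gamma>) \<le> (\<mu>*(\<beta>*\<gamma>)\<^sup>2)/8"
  proof -
    have "8*Mf*Qg \<le> \<beta>*\<mu>^3" using b1 mu by (simp add: field_simps)
    hence "Qg*Mf/\<mu>^2 \<le> \<beta>*\<mu>/8" using mu by (simp add: field_simps power3_eq_cube power2_eq_square)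
    hence "\<beta>*\<gamma>\<^sup>2*(Qg*Mf/\<mu>^2) \<le> \<beta>*\<gamma>\<^sup>2*(\<beta>*\<mu>/8)" using bpos by (intro mult_left_mono) auto
    thus ?thesis by (simp add: power2_eq_square field_simps)
  qed
  have e4: "4*K \<le> \<beta>* sqrt \<mu>"
    using b2 mu unfolding K_def by (simp add: field_simps)
  have c1: "c \<le> \<mu>/4" "c \<le> \<mu>\<^sup>2/(4*Lg\<^sup>2)" "c \<ge> 0" unfolding c_def using mu Lg by auto
  have c2: "c*Lg\<^sup>2/\<mu>\<^sup>2 \<le> 1/4" using c1(2) mu Lg by (simp add: field_simps)
  have c3: "c \<le> 1/4"
  proof -
    have "\<mu>\<^sup>2 \<le> Lg\<^sup>2" using muL mu by (simp add: power_mono)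
    hence "\<mu>\<^sup>2/(4*Lg\<^sup>2) \<le> 1/4" using Lg by (simp add: field_simps)
    thus ?thesis using c1 by linarith
  qed
  have sq: "(Lg*a/\<mu> + \<beta>*\<gamma>)\<^sup>2 \<le> 2*(Lg*a/\<mu>)\<^sup>2 + 2*(\<beta>*\<gamma>)\<^sup>2"
    by (smt (verit) sum_squares_bound zero_le_power2 power2_sum)
  have cn: "c*nw \<le> 3/4*a\<^sup>2 + \<mu>/2*(\<beta>*\<gamma>)\<^sup>2"
  proof -
    have "c*nw \<le> c*(a\<^sup>2 + 2*(Lg*a/\<mu>)\<^sup>2 + 2*(\<beta>*\<gamma>)\<^sup>2)"
      using nw sq c1(3) by (intro mult_left_mono) auto
    also have "\<dots> = c*a\<^sup>2 + 2*(c*Lg\<^sup>2/\<mu>\<^sup>2)*a\<^sup>2 + 2*c*(\<beta>*\<gamma>)\<^sup>2"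
      using mu by (simp add: field_simps power2_eq_square)
    also have "\<dots> \<le> 1/4*a\<^sup>2 + 2*(1/4)*a\<^sup>2 + 2*(\<mu>/4)*(\<beta>*\<gamma>)\<^sup>2"
      using c1 c2 c3 by (intro add_mono mult_right_mono mult_left_mono) auto
    finally show ?thesis by simp
  qed
  define s where "s = \<beta>* sqrt \<mu>*\<gamma>"
  have s2: "s\<^sup>2 = \<mu>*(\<beta>*\<gamma>)\<^sup>2" unfolding s_def using mu by (simp add: power_mult_distrib)
  have sa: "2*K*\<gamma>*a \<le> s*a/2"
  proof -
    have "2*K*\<gamma>*a = (4*K)*(\<gamma>*a)/2" by simp
    also have "\<dots> \<le> (\<beta>* sqrt \<mu>)*(\<gamma>*a)/2" using e4 a g by (intro divide_right_mono mult_right_mono) auto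
    finally show ?thesis unfolding s_def by (simp add: mult.assoc)
  qed
  have "P \<ge> a\<^sup>2 - 2*K*\<gamma>*a + 7/8*(\<mu>*(\<beta>*\<gamma>)\<^sup>2)"
  proof -
    have eY: "\<beta>\<^sup>2*(\<mu>*\<gamma>\<^sup>2) = \<mu>*(\<beta>*\<gamma>)\<^sup>2" by (simp add: power_mult_distrib)
    show ?thesis using P e1 e2 e3 eY by linarith
  qed
  moreover have "0 \<le> (a/2 - s/2)\<^sup>2 + s\<^sup>2/8" by simp
  ultimately have "P \<ge> c*nw"
    using cn sa s2 by (simp add: power2_eq_square algebra_simps) 
  thus ?thesis unfolding c_def .
qed



lemma lip_deriv_bound:
  fixes \<Phi> :: "'a::real_normed_vector \<Rightarrow> 'b::real_normed_vector"
  assumes lip: "L-lipschitz_on UNIV \<Phi>" and d: "(\<Phi> has_derivative \<Phi>') (at z)"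
  shows "norm (\<Phi>' h) \<le> L * norm h"
proof (cases "h = 0")
  case True
  have "bounded_linear \<Phi>'" using d by (rule has_derivative_bounded_linear)
  then show ?thesis using True by (simp add: linear_simps)
next
  case False
  have bl: "bounded_linear \<Phi>'" using d by (rule has_derivative_bounded_linear)
  have hpos: "norm h > 0" using False by simp
  show ?thesis
  proof (rule field_le_epsilon)
    fix e :: real assume e: "e > 0"
    from d[unfolded has_derivative_at_alt] e hpos obtain \<delta> where \<delta>: "\<delta> > 0"
      "\<And>y. norm (y - z) < \<delta> \<Longrightarrow> norm (\<Phi> y - \<Phi> z - \<Phi>' (y - z)) \<le> (e / norm h) * norm (y - z)"
      by (meson divide_pos_pos)
    define t where "t = \<delta> / (2 * norm h)"
    have tpos: "t > 0" using \<delta> hpos by (simp add: t_def)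
    have nt: "norm (t *\<^sub>R h) = \<delta>/2" using hpos tpos \<delta>(1) by (simp add: t_def)
    have 1: "norm (\<Phi> (z + t *\<^sub>R h) - \<Phi> z - \<Phi>' (t *\<^sub>R h)) \<le> (e / norm h) * norm (t *\<^sub>R h)"
      using \<delta>(2)[of "z + t *\<^sub>R h"] nt \<delta>(1) by simp
    have 2: "norm (\<Phi> (z + t *\<^sub>R h) - \<Phi> z) \<le> L * norm (t *\<^sub>R h)"
      using lipschitz_onD[OF lip, of "z + t *\<^sub>R h" z] by (simp add: dist_norm)
    have "norm (\<Phi>' (t *\<^sub>R h)) \<le> norm (\<Phi> (z + t *\<^sub>R h) - \<Phi> z) + norm (\<Phi> (z + t *\<^sub>R h) - \<Phi> z - \<Phi>' (t *\<^sub>R h))"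
      by (metis norm_triangle_ineq4 add.commute diff_diff_eq2 diff_add_cancel norm_minus_commute order_trans order_refl
          norm_diff_triangle_ineq)
    also have "\<dots> \<le> L * norm (t *\<^sub>R h) + (e / norm h) * norm (t *\<^sub>R h)" using 1 2 by simp
    finally have "t * norm (\<Phi>' h) \<le> t * (L * norm h + e)"
      using tpos hpos by (simp add: linear_cmul[OF bounded_linear.linear[OF bl]] field_simps)
    thus "norm (\<Phi>' h) \<le> L * norm h + e" using tpos by simp
  qed
qed

lemma line_deriv:
  fixes G :: "'a::real_normed_vector \<Rightarrow> 'b::real_normed_vector" and \<pi> :: "'b \<Rightarrow> real"
  assumes pi: "bounded_linear \<pi>" and d: "(G has_derivative G') (at (p + s *\<^sub>R q))"
  shows "((\<lambda>s. \<pi> (G (p + s *\<^sub>R q))) has_real_derivative \<pi> (G' q)) (at s)"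
proof -
  have l: "bounded_linear G'" using d by (rule has_derivative_bounded_linear)
  have d1: "((\<lambda>s. p + s *\<^sub>R q) has_derivative (\<lambda>h. h *\<^sub>R q)) (at s)"
    by (auto intro!: derivative_eq_intros)
  have "((\<lambda>s. G (p + s *\<^sub>R q)) has_derivative (\<lambda>h. G' (h *\<^sub>R q))) (at s)"
    using diff_chain_at[OF d1 d] by (simp add: o_def)
  hence "((\<lambda>s. \<pi> (G (p + s *\<^sub>R q))) has_derivative (\<lambda>h. \<pi> (G' (h *\<^sub>R q)))) (at s)"
    by (rule bounded_linear.has_derivative[OF pi])
  moreover have "(\<lambda>h. \<pi> (G' (h *\<^sub>R q))) = (\<lambda>h. \<pi> (G' q) * h)"
    using linear_cmul[OF bounded_linear.linear[OF l]] linear_cmul[OF bounded_linear.linear[OF pi]] by (auto simp: mult.commute)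
  ultimately show ?thesis by (simp add: has_field_derivative_def)
qed

lemma mat_quot:
  fixes M :: "real \<Rightarrow> real^'p^'n"
  assumes "\<And>i j. ((\<lambda>t. M t $ i $ j) has_real_derivative Lf i j) (at 0)"
  shows "((\<lambda>t. (1/t) *\<^sub>R (M t - M 0)) \<longlongrightarrow> (\<chi> i j. Lf i j)) (at 0)"
proof (intro vec_tendstoI)
  fix i j
  have "((\<lambda>t. (M t $ i $ j - M 0 $ i $ j) / (t - 0)) \<longlongrightarrow> Lf i j) (at 0)"
    using assms[of i j] by (simp add: has_field_derivative_iff)
  thus "((\<lambda>t. ((1/t) *\<^sub>R (M t - M 0)) $ i $ j) \<longlongrightarrow> (\<chi> i j. Lf i j) $ i $ j) (at 0)"
    by simp
qed



lemma mixed_deriv: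
  fixes F a \<psi> Pst :: "real \<Rightarrow> real \<Rightarrow> real"
  assumes F1: "\<And>s t. ((\<lambda>s. F s t) has_real_derivative a s t) (at s)"
    and F2: "\<And>s t. ((\<lambda>t. F s t) has_real_derivative \<psi> s t) (at t)"
    and F3: "\<And>s t. ((\<lambda>s. \<psi> s t) has_real_derivative Pst s t) (at s)"
    and F4: "\<And>\<epsilon>. \<epsilon> > 0 \<Longrightarrow> \<exists>r>0. \<forall>s t. \<bar>s\<bar> < r \<and> \<bar>t\<bar> < r \<longrightarrow> \<bar>Pst s t - Pst 0 0\<bar> \<le> \<epsilon>"
  shows "((\<lambda>t. a 0 t) has_real_derivative Pst 0 0) (at 0)"
proof -
  define L where "L = Pst 0 0"
  have "((\<lambda>t. (a 0 t - a 0 0) / (t - 0)) \<longlongrightarrow> L) (at 0)"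
  proof (rule tendstoI)
    fix \<epsilon> :: real assume \<epsilon>: "\<epsilon> > 0"
    obtain r where r: "r > 0" "\<And>s t. \<bar>s\<bar> < r \<Longrightarrow> \<bar>t\<bar> < r \<Longrightarrow> \<bar>Pst s t - L\<bar> \<le> \<epsilon>/2"
      using F4[of "\<epsilon>/2"] \<epsilon> unfolding L_def by auto
    have A: "\<bar>\<psi> s \<tau> - \<psi> 0 \<tau> - s * L\<bar> \<le> \<epsilon>/2 * \<bar>s\<bar>" if "\<bar>s\<bar> < r" "\<bar>\<tau>\<bar> < r" for s \<tau>
    proof -
      have "\<bar>(\<psi> s \<tau> - s * L) - (\<psi> 0 \<tau> - 0 * L)\<bar> \<le> \<epsilon>/2 * \<bar>s - 0\<bar>"
      proof (rule mvi[where f="\<lambda>\<sigma>. \<psi> \<sigma> \<tau> - \<sigma> * L" and f'="\<lambda>\<sigma>. Pst \<sigma> \<tau> - L" and r=r])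
        fix \<sigma> :: real assume "\<bar>\<sigma>\<bar> < r"
        show "((\<lambda>\<sigma>. \<psi> \<sigma> \<tau> - \<sigma> * L) has_real_derivative Pst \<sigma> \<tau> - L) (at \<sigma>)"
          using F3[where s="\<sigma>" and t="\<tau>"] by (auto intro!: derivative_eq_intros)
        show "\<bar>Pst \<sigma> \<tau> - L\<bar> \<le> \<epsilon>/2" using r(2) \<open>\<bar>\<sigma>\<bar> < r\<close> that(2) by auto
      qed (use that r in auto)
      thus ?thesis by (simp add: algebra_simps)
    qed
    have B: "\<bar>(F s t - F 0 t) - (F s 0 - F 0 0) - t * s * L\<bar> \<le> \<epsilon>/2 * \<bar>s\<bar> * \<bar>t\<bar>"
      if "\<bar>s\<bar> < r" "\<bar>t\<bar> < r" for s t
    proof -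
      have "\<bar>(F s t - F 0 t - t * s * L) - (F s 0 - F 0 0 - 0 * s * L)\<bar> \<le> (\<epsilon>/2 * \<bar>s\<bar>) * \<bar>t - 0\<bar>"
      proof (rule mvi[where f="\<lambda>\<tau>. F s \<tau> - F 0 \<tau> - \<tau> * s * L" and f'="\<lambda>\<tau>. \<psi> s \<tau> - \<psi> 0 \<tau> - s * L" and r=r])
        fix \<tau> :: real assume "\<bar>\<tau>\<bar> < r"
        show "((\<lambda>\<tau>. F s \<tau> - F 0 \<tau> - \<tau> * s * L) has_real_derivative \<psi> s \<tau> - \<psi> 0 \<tau> - s * L) (at \<tau>)"
          using F2[where s="s" and t="\<tau>"] F2[where s="0" and t="\<tau>"] by (auto intro!: derivative_eq_intros)
        show "\<bar>\<psi> s \<tau> - \<psi> 0 \<tau> - s * L\<bar> \<le> \<epsilon>/2 * \<bar>s\<bar>" using A that \<open>\<bar>\<tau>\<bar> < r\<close> by auto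
      qed (use that r in auto)
      thus ?thesis by (simp add: algebra_simps)
    qed
    have C: "\<bar>a 0 t - a 0 0 - t * L\<bar> \<le> \<epsilon>/2 * \<bar>t\<bar>" if t: "\<bar>t\<bar> < r" for t
    proof -
      have l1: "((\<lambda>s. (F s t - F 0 t) / (s - 0)) \<longlongrightarrow> a 0 t) (at 0)"
        using F1[where s="0" and t="t"] by (simp add: has_field_derivative_iff)
      have l2: "((\<lambda>s. (F s 0 - F 0 0) / (s - 0)) \<longlongrightarrow> a 0 0) (at 0)"
        using F1[where s="0" and t="0"] by (simp add: has_field_derivative_iff)
      have l: "((\<lambda>s. (F s t - F 0 t) / s - (F s 0 - F 0 0) / s - t * L) \<longlongrightarrow> a 0 t - a 0 0 - t * L) (at 0)"
        using l1 l2 by (auto intro!: tendsto_intros)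
      have ev: "\<forall>\<^sub>F s in at (0::real). norm ((F s t - F 0 t) / s - (F s 0 - F 0 0) / s - t * L) \<le> \<epsilon>/2 * \<bar>t\<bar>"
        unfolding eventually_at
      proof (intro exI[of _ r] conjI ballI impI allI)
        fix s :: real assume s: "s \<noteq> 0 \<and> dist s 0 < r"
        have "(F s t - F 0 t) / s - (F s 0 - F 0 0) / s - t * L = ((F s t - F 0 t) - (F s 0 - F 0 0) - t * s * L) / s"
          using s by (simp add: field_simps)
        hence "norm ((F s t - F 0 t) / s - (F s 0 - F 0 0) / s - t * L) = \<bar>(F s t - F 0 t) - (F s 0 - F 0 0) - t * s * L\<bar> / \<bar>s\<bar>"
          by simp
        also have "\<dots> \<le> (\<epsilon>/2 * \<bar>s\<bar> * \<bar>t\<bar>) / \<bar>s\<bar>"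
          using B[of s t] s t by (intro divide_right_mono) auto
        also have "\<dots> = \<epsilon>/2 * \<bar>t\<bar>" using s by simp
        finally show "norm ((F s t - F 0 t) / s - (F s 0 - F 0 0) / s - t * L) \<le> \<epsilon>/2 * \<bar>t\<bar>" .
      qed (use r in auto)
      show ?thesis using Lim_norm_ubound[OF _ l ev] by simp
    qed
    show "\<forall>\<^sub>F t in at (0::real). dist ((a 0 t - a 0 0) / (t - 0)) L < \<epsilon>"
      unfolding eventually_at
    proof (intro exI[of _ r] conjI ballI impI allI)
      fix t :: real assume t: "t \<noteq> 0 \<and> dist t 0 < r"
      have "dist ((a 0 t - a 0 0) / (t - 0)) L = \<bar>a 0 t - a 0 0 - t * L\<bar> / \<bar>t\<bar>"
        using t by (simp add: dist_real_def field_simps flip: abs_divide)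
      also have "\<dots> \<le> (\<epsilon>/2 * \<bar>t\<bar>) / \<bar>t\<bar>" using C[of t] t by (intro divide_right_mono) auto
      also have "\<dots> < \<epsilon>" using t \<epsilon> by simp
      finally show "dist ((a 0 t - a 0 0) / (t - 0)) L < \<epsilon>" .
    qed (use r in auto)
  qed
  thus ?thesis unfolding L_def by (simp add: has_field_derivative_iff)
qed



lemma pair_basis: "((0::real^'n), d) = (\<Sum>k\<in>UNIV. (d $ k) *\<^sub>R ((0::real^'n), axis k (1::real)))"
  "(d, (0::real^'p)) = (\<Sum>k\<in>UNIV. (d $ k) *\<^sub>R (axis k (1::real), (0::real^'p)))"
  by (simp_all add: prod_eq_iff fst_sum snd_sum basis_expansion[of d, unfolded scalar_mult_eq_scaleR])

lemma Gj_deriv: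
  fixes g :: "(real^'n) \<times> (real^'p) \<Rightarrow> real"
  assumes g_diff2: "\<forall>z. (\<lambda>u. (gradx g u, grady g u)) differentiable (at z)"
  shows "((\<lambda>u. grady g u $ j) has_derivative frechet_derivative (\<lambda>u. grady g u $ j) (at z)) (at z)"
proof -
  have bl: "bounded_linear (\<lambda>p::(real^'n)\<times>(real^'p). snd p $ j)"
    by (rule bounded_linear_compose[OF bounded_linear_vec_nth bounded_linear_snd])
  have "((\<lambda>u. (gradx g u, grady g u)) has_derivative frechet_derivative (\<lambda>u. (gradx g u, grady g u)) (at z)) (at z)"
    using g_diff2 frechet_derivative_works by blast
  from bounded_linear.has_derivative[OF bl this] have "((\<lambda>u. grady g u $ j) differentiable (at z))"
    unfolding differentiable_def by auto
  thus ?thesis using frechet_derivative_works by blast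
qed

lemma Dj_Hyy:
  fixes g :: "(real^'n) \<times> (real^'p) \<Rightarrow> real"
  assumes g_diff2: "\<forall>z. (\<lambda>u. (gradx g u, grady g u)) differentiable (at z)"
  shows "frechet_derivative (\<lambda>u. grady g u $ j) (at z) (0, d) = (\<Sum>k\<in>UNIV. d $ k * Hyy g z $ k $ j)"
proof -
  have bl: "bounded_linear (frechet_derivative (\<lambda>u. grady g u $ j) (at z))"
    using Gj_deriv[OF g_diff2] by (rule has_derivative_bounded_linear)
  have l: "linear (frechet_derivative (\<lambda>u. grady g u $ j) (at z))" using bl bounded_linear.linear by blast
  show ?thesis
    apply (subst pair_basis(1))
    apply (simp only: linear_sum[OF l] linear_cmul[OF l])
    apply (simp add: Hyy_def)
    done
qed

lemma D3xyy_conv: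
  fixes g :: "(real^'n) \<times> (real^'p) \<Rightarrow> real"
  assumes g_diff2: "\<forall>z. (\<lambda>u. (gradx g u, grady g u)) differentiable (at z)"
    and Hyy_C1: "\<exists>D'. (\<forall>z. (Hyy g has_derivative blinfun_apply (D' z)) (at z)) \<and> continuous_on UNIV D'"
  shows "\<exists>Lm. ((\<lambda>t. (1/t) *\<^sub>R (Hxy g (x, y + t *\<^sub>R d) - Hxy g (x,y))) \<longlongrightarrow> Lm) (at 0)"
proof -
  obtain D' where D': "\<And>z. (Hyy g has_derivative blinfun_apply (D' z)) (at z)" "continuous_on UNIV D'"
    using Hyy_C1 by blast
  define Dj where "Dj j z = frechet_derivative (\<lambda>u. grady g u $ j) (at z)" for j z
  have Dj: "((\<lambda>u. grady g u $ j) has_derivative Dj j z) (at z)" for j z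
    unfolding Dj_def by (rule Gj_deriv[OF g_diff2])
  have comp: "((\<lambda>t. Hxy g (x, y + t *\<^sub>R d) $ i $ j) has_real_derivative
        (\<Sum>k\<in>UNIV. d $ k * (blinfun_apply (D' (x,y)) (axis i 1, 0)) $ k $ j)) (at 0)" for i j
  proof -
    define pt where "pt s t = (x,y) + s *\<^sub>R (axis i (1::real), 0::real^'p) + t *\<^sub>R (0::real^'n, d)" for s t
    define P where "P z = (\<Sum>k\<in>UNIV. d $ k * (blinfun_apply (D' z) (axis i 1, 0)) $ k $ j)" for z
    have pts: "pt s t = pt 0 t + s *\<^sub>R (axis i 1, 0)" for s t by (simp add: pt_def algebra_simps)
    have ptt: "pt s t = pt s 0 + t *\<^sub>R (0, d)" for s t by (simp add: pt_def algebra_simps)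
    have pt0: "pt 0 t = (x, y + t *\<^sub>R d)" for t by (simp add: pt_def)
    have "((\<lambda>t. Hxy g (pt 0 t) $ i $ j) has_real_derivative P (pt 0 0)) (at 0)"
    proof (rule mixed_deriv[where F="\<lambda>s t. grady g (pt s t) $ j" and \<psi>="\<lambda>s t. \<Sum>k\<in>UNIV. d $ k * Hyy g (pt s t) $ k $ j"
          and Pst="\<lambda>s t. P (pt s t)" and a="\<lambda>s t. Hxy g (pt s t) $ i $ j"])
      fix s t :: real
      have "((\<lambda>s. grady g (pt 0 t + s *\<^sub>R (axis i 1, 0)) $ j) has_real_derivative
              Dj j (pt 0 t + s *\<^sub>R (axis i 1, 0)) (axis i 1, 0)) (at s)"
        by (rule line_deriv[where \<pi>="\<lambda>x::real. x" and G="\<lambda>u. grady g u $ j", OF bounded_linear_ident Dj])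
      thus "((\<lambda>s. grady g (pt s t) $ j) has_real_derivative Hxy g (pt s t) $ i $ j) (at s)"
        by (subst (1 2) pts) (simp add: Hxy_def Dj_def)
    next
      fix s t :: real
      have "((\<lambda>t. grady g (pt s 0 + t *\<^sub>R (0, d)) $ j) has_real_derivative
              Dj j (pt s 0 + t *\<^sub>R (0, d)) (0, d)) (at t)"
        by (rule line_deriv[where \<pi>="\<lambda>x::real. x" and G="\<lambda>u. grady g u $ j", OF bounded_linear_ident Dj])
      thus "((\<lambda>t. grady g (pt s t) $ j) has_real_derivative (\<Sum>k\<in>UNIV. d $ k * Hyy g (pt s t) $ k $ j)) (at t)"
        by (subst (1 2) ptt) (simp add: Dj_def Dj_Hyy[OF g_diff2])
    next
      fix s t :: real
      have bl: "bounded_linear (\<lambda>M::real^'p^'p. M $ k $ j)" for k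
        by (rule bounded_linear_compose[OF bounded_linear_vec_nth bounded_linear_vec_nth])
      have "((\<lambda>s. (\<lambda>M. M $ k $ j) (Hyy g (pt 0 t + s *\<^sub>R (axis i 1, 0)))) has_real_derivative
              (\<lambda>M. M $ k $ j) (blinfun_apply (D' (pt 0 t + s *\<^sub>R (axis i 1, 0))) (axis i 1, 0))) (at s)" for k
        by (rule line_deriv[OF bl D'(1)])
      hence "((\<lambda>s. Hyy g (pt s t) $ k $ j) has_real_derivative
              (blinfun_apply (D' (pt s t)) (axis i 1, 0)) $ k $ j) (at s)" for k
        by (subst (1 2) pts) simp
      thus "((\<lambda>s. \<Sum>k\<in>UNIV. d $ k * Hyy g (pt s t) $ k $ j) has_real_derivative P (pt s t)) (at s)"
        unfolding P_def by (auto intro!: DERIV_sum DERIV_cmult)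
    next
      fix \<epsilon> :: real assume \<epsilon>: "\<epsilon> > 0"
      have cP: "continuous_on UNIV P" unfolding P_def
        by (intro continuous_intros D'(2))
      then obtain \<delta> where \<delta>: "\<delta> > 0" "\<And>z. dist z (pt 0 0) < \<delta> \<Longrightarrow> dist (P z) (P (pt 0 0)) < \<epsilon>"
        unfolding continuous_on_iff using \<epsilon> by blast
      define r where "r = \<delta> / (2 * (1 + norm d))"
      have r: "r > 0" using \<delta> by (simp add: r_def add_pos_nonneg)
      show "\<exists>r>0. \<forall>s t. \<bar>s\<bar> < r \<and> \<bar>t\<bar> < r \<longrightarrow> \<bar>P (pt s t) - P (pt 0 0)\<bar> \<le> \<epsilon>"
      proof (intro exI[of _ r] conjI allI impI r)
        fix s t :: real assume st: "\<bar>s\<bar> < r \<and> \<bar>t\<bar> < r"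
        have "dist (pt s t) (pt 0 0) = norm (s *\<^sub>R (axis i (1::real), 0::real^'p) + t *\<^sub>R (0::real^'n, d))"
          by (simp add: pt_def dist_norm)
        also have "\<dots> \<le> norm (s *\<^sub>R (axis i (1::real), 0::real^'p)) + norm (t *\<^sub>R (0::real^'n, d))"
          by (rule norm_triangle_ineq)
        also have "\<dots> = \<bar>s\<bar> + \<bar>t\<bar> * norm d" by (simp add: norm_Pair)
        also have "\<dots> \<le> r + r * norm d" using st by (intro add_mono mult_right_mono) auto
        also have "\<dots> = r * (1 + norm d)" by (simp add: algebra_simps)
        also have "\<dots> = \<delta> / 2"
        proof -
          have "2 + norm d * 2 \<noteq> 0" using norm_ge_zero[of d] by linarith
          thus ?thesis unfolding r_def by (simp add: divide_simps)
        qed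
        also have "\<dots> < \<delta>" using \<delta> by simp
        finally have "dist (P (pt s t)) (P (pt 0 0)) < \<epsilon>" by (rule \<delta>(2))
        thus "\<bar>P (pt s t) - P (pt 0 0)\<bar> \<le> \<epsilon>" by (simp add: dist_real_def)
      qed
    qed
    thus ?thesis by (simp add: pt0 P_def pt_def)
  qed
  have "((\<lambda>t. (1/t) *\<^sub>R (Hxy g (x, y + t *\<^sub>R d) - Hxy g (x, y + 0 *\<^sub>R d))) \<longlongrightarrow>
         (\<chi> i j. \<Sum>k\<in>UNIV. d $ k * (blinfun_apply (D' (x,y)) (axis i 1, 0)) $ k $ j)) (at 0)"
    by (rule mat_quot[where M="\<lambda>t. Hxy g (x, y + t *\<^sub>R d)", OF comp])
  thus ?thesis by auto
qed



lemma coerc: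
  fixes r q :: "'a::real_inner"
  assumes "\<mu> > 0" "\<mu> * (r \<bullet> r) \<le> r \<bullet> q"
  shows "norm r \<le> norm q / \<mu>"
proof -
  have "\<mu> * (norm r * norm r) \<le> norm r * norm q"
    using assms(2) norm_cauchy_schwarz[of r q] by (simp add: power2_norm_eq_inner[symmetric] power2_eq_square)
  hence "norm r * (\<mu> * norm r) \<le> norm r * norm q" by (simp add: algebra_simps)
  hence "\<mu> * norm r \<le> norm q" if "norm r > 0" using that by simp
  thus ?thesis using assms(1) by (cases "norm r > 0") (auto simp: field_simps)
qed

lemma abstract_ineq:
  fixes H Ty :: "real^'p^'p" and B Tx :: "real^'p^'n" and G dy :: "real^'p" and dx :: "real^'n"
    and \<mu> Lg Qg Mf \<beta> :: real
  assumes pos: "\<mu> > 0" "Lg > 0" "Qg > 0" "Mf > 0" and muL: "\<mu> \<le> Lg"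
    and Hpd: "\<And>v. \<mu> * (v \<bullet> v) \<le> v \<bullet> (H *v v)"
    and Bt: "\<And>u. norm (transpose B *v u) \<le> Lg * norm u"
    and Tx: "\<And>w. norm (Tx *v w) \<le> Qg * norm (matrix_inv H *v G) * norm w"
    and Ty: "\<And>w. norm (Ty *v w) \<le> Qg * norm (matrix_inv H *v G) * norm w"
    and dy: "norm dy \<le> Mf"
    and b1: "\<beta> \<ge> 8*Mf*Qg/\<mu>^3" and b2: "\<beta> \<ge> 4*Mf*Qg*Lg/(\<mu>^3 * sqrt \<mu>)"
  shows "min (\<mu>\<^sup>2/(4*Lg\<^sup>2)) (\<mu>/4) * (norm (dx - (B ** matrix_inv H) *v dy,
             - (transpose (B ** matrix_inv H) *v (dx - (B ** matrix_inv H) *v dy)) + \<beta> *\<^sub>R G))\<^sup>2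
         \<le> (dx + (- (B ** matrix_inv H) + Tx ** matrix_inv H) *v dy + \<beta> *\<^sub>R (B *v G),
             (Ty ** matrix_inv H) *v dy + \<beta> *\<^sub>R (H *v G)) \<bullet>
            (dx - (B ** matrix_inv H) *v dy,
             - (transpose (B ** matrix_inv H) *v (dx - (B ** matrix_inv H) *v dy)) + \<beta> *\<^sub>R G)"
proof -
  define Hi where "Hi = matrix_inv H"
  have ker: "\<forall>v. H *v v = 0 \<longrightarrow> v = 0"
  proof (intro allI impI)
    fix v assume "H *v v = 0"
    hence "\<mu> * (v \<bullet> v) \<le> 0" using Hpd[of v] by simp
    hence "v \<bullet> v \<le> 0" using pos(1) by (simp add: mult_le_0_iff)
    thus "v = 0" by (metis antisym inner_ge_zero inner_eq_zero_iff)
  qed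
  have inv: "invertible H"
    using ker by (simp add: invertible_left_inverse matrix_left_invertible_ker)
  have HHi: "H ** Hi = mat 1 \<and> Hi ** H = mat 1"
    unfolding Hi_def matrix_inv_def using someI_ex[OF inv[unfolded invertible_def]] .
  have Hi_bd: "norm (Hi *v q) \<le> norm q / \<mu>" for q
  proof (rule coerc[OF pos(1)])
    have "H *v (Hi *v q) = q" using HHi by (simp add: matrix_vector_mul_assoc)
    thus "\<mu> * ((Hi *v q) \<bullet> (Hi *v q)) \<le> (Hi *v q) \<bullet> q" using Hpd[of "Hi *v q"] by simp
  qed
  have HiT_bd: "norm (transpose Hi *v q) \<le> norm q / \<mu>" for q
  proof (rule coerc[OF pos(1)])
    define r where "r = transpose Hi *v q"
    have "transpose H *v r = transpose (Hi ** H) *v q"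
      unfolding r_def by (simp only: matrix_vector_mul_assoc matrix_transpose_mul)
    hence 1: "transpose H *v r = q" using HHi by simp
    have "r \<bullet> (transpose H *v r) = r \<bullet> (H *v r)"
      by (simp only: transpose_matrix_vector inner_commute[of r "r v* H"] dot_lmul_matrix)
    thus "\<mu> * (r \<bullet> r) \<le> r \<bullet> q" using Hpd[of r] 1 by simp
  qed
  define u where "u = dx - (B ** Hi) *v dy"
  define r where "r = Hi *v dy"
  define q where "q = transpose (B ** Hi) *v u"
  define a where "a = norm u"
  define \<gamma> where "\<gamma> = norm G"
  define \<kappa> where "\<kappa> = Qg*(\<gamma>/\<mu>)*(Mf/\<mu>)"
  have bpos: "\<beta> > 0" using b1 pos by (smt (verit) divide_pos_pos mult_pos_pos zero_less_power)
  have zx: "dx + (- (B ** Hi) + Tx ** Hi) *v dy + \<beta> *\<^sub>R (B *v G) = u + Tx *v r + \<beta> *\<^sub>R (B *v G)"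
    unfolding u_def r_def
    by (simp add: matrix_vector_mult_add_rdistrib matrix_vector_mul_assoc[symmetric] algebra_simps)
  have zy: "(Ty ** Hi) *v dy + \<beta> *\<^sub>R (H *v G) = Ty *v r + \<beta> *\<^sub>R (H *v G)"
    unfolding r_def by (simp add: matrix_vector_mul_assoc[symmetric])
  have key: "(H *v G) \<bullet> q = u \<bullet> (B *v G)"
  proof -
    have "(H *v G) \<bullet> q = (u v* (B ** Hi)) \<bullet> (H *v G)" unfolding q_def by (simp add: inner_commute)
    also have "\<dots> = u \<bullet> ((B ** Hi) *v (H *v G))" by (rule dot_lmul_matrix)
    also have "(B ** Hi) *v (H *v G) = B *v G" using HHi
      by (simp add: matrix_vector_mul_assoc[symmetric]) (simp add: matrix_vector_mul_assoc)
    finally show ?thesis .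
  qed
  have expand: "(u + Tx *v r + \<beta> *\<^sub>R (B *v G), Ty *v r + \<beta> *\<^sub>R (H *v G)) \<bullet> (u, - q + \<beta> *\<^sub>R G)
      = a\<^sup>2 + (Tx *v r) \<bullet> u - (Ty *v r) \<bullet> q + \<beta> * ((Ty *v r) \<bullet> G) + \<beta>\<^sup>2 * ((H *v G) \<bullet> G)"
    using key unfolding a_def
    by (simp add: inner_add_left inner_add_right power2_norm_eq_inner inner_commute algebra_simps power2_eq_square flip: power2_norm_eq_inner)
  have vv: "norm (Hi *v G) \<le> \<gamma>/\<mu>" unfolding \<gamma>_def by (rule Hi_bd)
  have rr: "norm r \<le> Mf/\<mu>" unfolding r_def using Hi_bd[of dy] dy pos(1) by (smt (verit) divide_right_mono)
  have Tr: "norm (Tx *v r) \<le> \<kappa>" "norm (Ty *v r) \<le> \<kappa>"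
  proof -
    have "Qg * norm (Hi *v G) * norm r \<le> \<kappa>" unfolding \<kappa>_def using vv rr pos
      by (intro mult_mono) (auto simp: \<gamma>_def)
    thus "norm (Tx *v r) \<le> \<kappa>" "norm (Ty *v r) \<le> \<kappa>"
      using Tx[of r] Ty[of r] unfolding Hi_def by linarith+
  qed
  have qq: "norm q \<le> Lg * a / \<mu>"
  proof -
    have "q = transpose Hi *v (transpose B *v u)" unfolding q_def
      by (simp only: matrix_vector_mul_assoc matrix_transpose_mul)
    hence "norm q \<le> norm (transpose B *v u) / \<mu>" using HiT_bd by simp
    also have "\<dots> \<le> Lg * a / \<mu>" unfolding a_def using Bt[of u] pos(1) by (simp add: divide_right_mono)
    finally show ?thesis .
  qed
  have kpos: "\<kappa> \<ge> 0" unfolding \<kappa>_def \<gamma>_def using pos by simp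
  have t1: "(Tx *v r) \<bullet> u \<ge> - (\<kappa> * a)"
  proof -
    have "\<bar>(Tx *v r) \<bullet> u\<bar> \<le> norm (Tx *v r) * norm u" by (rule Cauchy_Schwarz_ineq2)
    also have "\<dots> \<le> \<kappa> * a" unfolding a_def using Tr by (intro mult_right_mono) auto
    finally show ?thesis by linarith
  qed
  have t2: "(Ty *v r) \<bullet> q \<le> \<kappa> * (Lg * a / \<mu>)"
  proof -
    have "\<bar>(Ty *v r) \<bullet> q\<bar> \<le> norm (Ty *v r) * norm q" by (rule Cauchy_Schwarz_ineq2)
    also have "\<dots> \<le> \<kappa> * (Lg * a / \<mu>)" using Tr qq kpos by (intro mult_mono) auto
    finally show ?thesis by linarith
  qed
  have t3: "\<beta> * ((Ty *v r) \<bullet> G) \<ge> - (\<beta> * (\<kappa> * \<gamma>))"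
  proof -
    have "\<bar>(Ty *v r) \<bullet> G\<bar> \<le> norm (Ty *v r) * norm G" by (rule Cauchy_Schwarz_ineq2)
    also have "\<dots> \<le> \<kappa> * \<gamma>" unfolding \<gamma>_def using Tr by (intro mult_right_mono) auto
    finally have "(Ty *v r) \<bullet> G \<ge> - (\<kappa> * \<gamma>)" by linarith
    thus ?thesis using bpos by (metis less_eq_real_def mult_left_mono mult_minus_right)
  qed
  have t4: "\<beta>\<^sup>2 * ((H *v G) \<bullet> G) \<ge> \<beta>\<^sup>2 * (\<mu> * \<gamma>\<^sup>2)"
  proof -
    have "\<mu> * \<gamma>\<^sup>2 \<le> (H *v G) \<bullet> G" using Hpd[of G] unfolding \<gamma>_def
      by (simp add: power2_norm_eq_inner inner_commute)
    thus ?thesis by (simp add: mult_left_mono)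
  qed
  have P: "(u + Tx *v r + \<beta> *\<^sub>R (B *v G), Ty *v r + \<beta> *\<^sub>R (H *v G)) \<bullet> (u, - q + \<beta> *\<^sub>R G)
     \<ge> a\<^sup>2 - Qg*(\<gamma>/\<mu>)*(Mf/\<mu>)*a - Qg*(\<gamma>/\<mu>)*(Mf/\<mu>)*(Lg*a/\<mu>)
               - \<beta>*(Qg*(\<gamma>/\<mu>)*(Mf/\<mu>)*\<gamma>) + \<beta>\<^sup>2*(\<mu>*\<gamma>\<^sup>2)"
    unfolding expand using t1 t2 t3 t4 unfolding \<kappa>_def by (simp add: algebra_simps)
  have nw: "(norm (u, - q + \<beta> *\<^sub>R G))\<^sup>2 \<le> a\<^sup>2 + (Lg*a/\<mu> + \<beta>*\<gamma>)\<^sup>2"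
  proof -
    have "norm (- q + \<beta> *\<^sub>R G) \<le> norm q + \<beta> * \<gamma>"
      unfolding \<gamma>_def using bpos by (metis abs_of_pos norm_minus_cancel norm_scaleR norm_triangle_ineq)
    also have "\<dots> \<le> Lg*a/\<mu> + \<beta>*\<gamma>" using qq by simp
    finally have "(norm (- q + \<beta> *\<^sub>R G))\<^sup>2 \<le> (Lg*a/\<mu> + \<beta>*\<gamma>)\<^sup>2" by (simp add: power_mono)
    thus ?thesis unfolding a_def by (simp add: norm_Pair)
  qed
  have "min (\<mu>\<^sup>2/(4*Lg\<^sup>2)) (\<mu>/4) * (norm (u, - q + \<beta> *\<^sub>R G))\<^sup>2 \<le>
      (u + Tx *v r + \<beta> *\<^sub>R (B *v G), Ty *v r + \<beta> *\<^sub>R (H *v G)) \<bullet> (u, - q + \<beta> *\<^sub>R G)"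
    by (rule final_arith[OF _ _ pos(1,2,3,4) muL b1 b2 P nw]) (auto simp: a_def \<gamma>_def)
  thus ?thesis unfolding Hi_def[symmetric] zx zy u_def[symmetric] q_def[symmetric] .
qed


lemma Dj_Hxy:
  fixes g :: "(real^'n) \<times> (real^'p) \<Rightarrow> real"
  assumes g_diff2: "\<forall>z. (\<lambda>u. (gradx g u, grady g u)) differentiable (at z)"
  shows "frechet_derivative (\<lambda>u. grady g u $ j) (at z) (d, 0) = (\<Sum>k\<in>UNIV. d $ k * Hxy g z $ k $ j)"
proof -
  have bl: "bounded_linear (frechet_derivative (\<lambda>u. grady g u $ j) (at z))"
    using Gj_deriv[OF g_diff2] by (rule has_derivative_bounded_linear)
  have l: "linear (frechet_derivative (\<lambda>u. grady g u $ j) (at z))" using bl bounded_linear.linear by blast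
  show ?thesis
    apply (subst pair_basis(2))
    apply (simp only: linear_sum[OF l] linear_cmul[OF l])
    apply (simp add: Hxy_def)
    done
qed

lemma Dj_Phi:
  fixes g :: "(real^'n) \<times> (real^'p) \<Rightarrow> real"
  assumes g_diff2: "\<forall>z. (\<lambda>u. (gradx g u, grady g u)) differentiable (at z)"
  shows "frechet_derivative (\<lambda>u. grady g u $ j) (at z) h
         = snd (frechet_derivative (\<lambda>u. (gradx g u, grady g u)) (at z) h) $ j"
proof -
  have bl: "bounded_linear (\<lambda>p::(real^'n)\<times>(real^'p). snd p $ j)"
    by (rule bounded_linear_compose[OF bounded_linear_vec_nth bounded_linear_snd])
  have "((\<lambda>u. (gradx g u, grady g u)) has_derivative frechet_derivative (\<lambda>u. (gradx g u, grady g u)) (at z)) (at z)"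
    using g_diff2 frechet_derivative_works by blast
  from bounded_linear.has_derivative[OF bl this]
  have "frechet_derivative (\<lambda>u. grady g u $ j) (at z) = (\<lambda>h. snd (frechet_derivative (\<lambda>u. (gradx g u, grady g u)) (at z) h) $ j)"
    by (simp add: frechet_derivative_at[symmetric])
  thus ?thesis by simp
qed

lemma D3yyy_conv:
  fixes g :: "(real^'n) \<times> (real^'p) \<Rightarrow> real"
  assumes Hyy_C1: "\<exists>D'. (\<forall>z. (Hyy g has_derivative blinfun_apply (D' z)) (at z)) \<and> continuous_on UNIV D'"
  shows "\<exists>Lm. ((\<lambda>t. (1/t) *\<^sub>R (Hyy g (x, y + t *\<^sub>R d) - Hyy g (x,y))) \<longlongrightarrow> Lm) (at 0)"
proof -
  obtain D' where D': "\<And>z. (Hyy g has_derivative blinfun_apply (D' z)) (at z)"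
    using Hyy_C1 by blast
  have comp: "((\<lambda>t. Hyy g (x, y + t *\<^sub>R d) $ i $ j) has_real_derivative
        (blinfun_apply (D' ((x,y) + 0 *\<^sub>R (0,d))) (0, d)) $ i $ j) (at 0)" for i j
  proof -
    have bl: "bounded_linear (\<lambda>M::real^'p^'p. M $ i $ j)"
      by (rule bounded_linear_compose[OF bounded_linear_vec_nth bounded_linear_vec_nth])
    have "((\<lambda>s. (\<lambda>M. M $ i $ j) (Hyy g ((x,y) + s *\<^sub>R (0,d)))) has_real_derivative
              (\<lambda>M. M $ i $ j) (blinfun_apply (D' ((x,y) + 0 *\<^sub>R (0,d))) (0, d))) (at 0)"
      by (rule line_deriv[OF bl D'])
    thus ?thesis by simp
  qed
  have "((\<lambda>t. (1/t) *\<^sub>R (Hyy g (x, y + t *\<^sub>R d) - Hyy g (x, y + 0 *\<^sub>R d))) \<longlongrightarrow>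
         (\<chi> i j. (blinfun_apply (D' ((x,y) + 0 *\<^sub>R (0,d))) (0, d)) $ i $ j)) (at 0)"
    by (rule mat_quot[where M="\<lambda>t. Hyy g (x, y + t *\<^sub>R d)", OF comp])
  thus ?thesis by auto
qed



lemma cont_mv_snd: "continuous_on S (\<lambda>p::('a::real_normed_vector \<times> (real^'p)). (A::real^'p^'k) *v snd p)"
  by (rule linear_continuous_on[OF bounded_linear_compose[OF matrix_vector_mul_bounded_linear bounded_linear_snd]])

theorem proposition4p8:
  fixes f g :: "(real^'n) \<times> (real^'p) \<Rightarrow> real"
    and Df :: "(real^'n) \<times> (real^'p) \<Rightarrow> ((real^'n) \<times> (real^'p)) set"
    and Mf \<mu> Lg Qg \<beta> :: real
  assumes pos: "Mf > 0" "\<mu> > 0" "Lg > 0" "Qg > 0"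
    and f_lip: "Mf-lipschitz_on UNIV f"
    and g_diff: "\<forall>z. g differentiable (at z)"
    and g_diff2: "\<forall>z. (\<lambda>u. (gradx g u, grady g u)) differentiable (at z)"
    and H_pd: "\<forall>z v. \<mu> * (v \<bullet> v) \<le> v \<bullet> (Hyy g z *v v)"
    and grad_lip: "Lg-lipschitz_on UNIV (\<lambda>u. (gradx g u, grady g u))"
    and Hyy_lip: "\<forall>z z'. onorm (\<lambda>v. (Hyy g z - Hyy g z') *v v) \<le> Qg * dist z z'"
    and Hxy_lip: "\<forall>z z'. onorm (\<lambda>v. (Hxy g z - Hxy g z') *v v) \<le> Qg * dist z z'"
    and Hyy_C1: "\<exists>D'. (\<forall>z. (Hyy g has_derivative blinfun_apply (D' z)) (at z)) \<and> continuous_on UNIV D'"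
    and f_pot: "potential_of f Df"
    and Df_vals: "\<forall>z. compact (Df z) \<and> convex (Df z) \<and> (\<forall>d\<in>Df z. norm d \<le> Mf)"
    and beta: "\<beta> \<ge> max (8 * Mf * Qg / \<mu> ^ 3) (4 * Mf * Qg * Lg / \<mu> powr 3.5)"
  shows "\<forall>x y. \<forall>w \<in> Dp_hat g Df \<beta> x y.
           Sup ((\<lambda>z. z \<bullet> w) ` Dh g Df \<beta> x y) \<ge> min (\<mu>^2 / (4 * Lg^2)) (\<mu> / 4) * (norm w)^2"
proof (intro allI ballI)
  fix x y w
  assume wD: "w \<in> Dp_hat g Df \<beta> x y"
  define \<Phi> where "\<Phi> = (\<lambda>u. (gradx g u, grady g u))"
  have Phid: "(\<Phi> has_derivative frechet_derivative \<Phi> (at z)) (at z)" for z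
    using g_diff2 frechet_derivative_works unfolding \<Phi>_def by blast
  have Phib: "norm (frechet_derivative \<Phi> (at z) h) \<le> Lg * norm h" for z h
    by (rule lip_deriv_bound[OF grad_lip[folded \<Phi>_def] Phid])
  have Bt_eq: "transpose (Hxy g z) *v u = snd (frechet_derivative \<Phi> (at z) (u, 0))" for z u
  proof -
    have "(transpose (Hxy g z) *v u) $ j = snd (frechet_derivative \<Phi> (at z) (u, 0)) $ j" for j
    proof -
      have "(transpose (Hxy g z) *v u) $ j = (\<Sum>k\<in>UNIV. u $ k * Hxy g z $ k $ j)"
        by (simp add: matrix_vector_mult_def transpose_def mult.commute)
      also have "\<dots> = frechet_derivative (\<lambda>u. grady g u $ j) (at z) (u, 0)"
        by (rule Dj_Hxy[OF g_diff2, symmetric])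
      also have "\<dots> = snd (frechet_derivative \<Phi> (at z) (u, 0)) $ j"
        unfolding \<Phi>_def by (rule Dj_Phi[OF g_diff2])
      finally show ?thesis .
    qed
    thus ?thesis by (simp add: vec_eq_iff)
  qed
  have HT_eq: "transpose (Hyy g z) *v v = snd (frechet_derivative \<Phi> (at z) (0, v))" for z v
  proof -
    have "(transpose (Hyy g z) *v v) $ j = snd (frechet_derivative \<Phi> (at z) (0, v)) $ j" for j
    proof -
      have "(transpose (Hyy g z) *v v) $ j = (\<Sum>k\<in>UNIV. v $ k * Hyy g z $ k $ j)"
        by (simp add: matrix_vector_mult_def transpose_def mult.commute)
      also have "\<dots> = frechet_derivative (\<lambda>u. grady g u $ j) (at z) (0, v)"
        by (rule Dj_Hyy[OF g_diff2, symmetric])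
      also have "\<dots> = snd (frechet_derivative \<Phi> (at z) (0, v)) $ j"
        unfolding \<Phi>_def by (rule Dj_Phi[OF g_diff2])
      finally show ?thesis .
    qed
    thus ?thesis by (simp add: vec_eq_iff)
  qed
  have Bt: "norm (transpose (Hxy g (x,y)) *v u) \<le> Lg * norm u" for u
  proof -
    have "norm (transpose (Hxy g (x,y)) *v u) \<le> norm (frechet_derivative \<Phi> (at (x,y)) (u, 0))"
      unfolding Bt_eq by (metis norm_snd_le prod.collapse)
    also have "\<dots> \<le> Lg * norm (u, 0::real^'p)" by (rule Phib)
    finally show ?thesis by (simp add: norm_Pair)
  qed
  have muL: "\<mu> \<le> Lg"
  proof -
    define v :: "real^'p" where "v = axis undefined 1"
    have nv: "norm v = 1" unfolding v_def by simp
    have "\<mu> = \<mu> * (v \<bullet> v)" using nv by (simp add: power2_norm_eq_inner[symmetric])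
    also have "\<dots> \<le> v \<bullet> (Hyy g (x,y) *v v)" using H_pd by blast
    also have "\<dots> = (transpose (Hyy g (x,y)) *v v) \<bullet> v"
      by (simp only: transpose_matrix_vector dot_lmul_matrix)
    also have "\<dots> \<le> norm (transpose (Hyy g (x,y)) *v v) * norm v" by (rule norm_cauchy_schwarz)
    also have "\<dots> \<le> norm (frechet_derivative \<Phi> (at (x,y)) (0, v))" unfolding HT_eq nv
      by (metis mult.right_neutral norm_snd_le prod.collapse)
    also have "\<dots> \<le> Lg * norm (0::real^'n, v)" by (rule Phib)
    finally show ?thesis using nv by (simp add: norm_Pair)
  qed
  from wD obtain d where d: "d \<in> Df (x, Amap g x y)"
    and wdef: "w = WTmap g x y (Wmap g x y d) + (0, \<beta> *\<^sub>R grady g (x, y))"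
    unfolding Dp_hat_def by blast
  define H where "H = Hyy g (x,y)"
  define B where "B = Hxy g (x,y)"
  define G where "G = grady g (x,y)"
  define vv where "vv = matrix_inv H *v G"
  have Tx: "norm (D3xyy g x y vv *v q) \<le> Qg * norm vv * norm q" for q
  proof -
    obtain Lm where "((\<lambda>t. (1/t) *\<^sub>R (Hxy g (x, y + t *\<^sub>R vv) - Hxy g (x,y))) \<longlongrightarrow> Lm) (at 0)"
      using D3xyy_conv[OF g_diff2 Hyy_C1] by blast
    moreover have "onorm (\<lambda>v. (Hxy g (x, y + t *\<^sub>R vv) - Hxy g (x,y)) *v v) \<le> Qg * (\<bar>t\<bar> * norm vv)" for t
    proof -
      have "dist (x, y + t *\<^sub>R vv) (x,y) = \<bar>t\<bar> * norm vv" by (simp add: dist_norm norm_Pair)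
      thus ?thesis using Hxy_lip[rule_format, of "(x, y + t *\<^sub>R vv)" "(x,y)"] by simp
    qed
    ultimately show ?thesis unfolding D3xyy_def by (rule D3_bound)
  qed
  have Ty: "norm (D3yyy g x y vv *v q) \<le> Qg * norm vv * norm q" for q
  proof -
    obtain Lm where "((\<lambda>t. (1/t) *\<^sub>R (Hyy g (x, y + t *\<^sub>R vv) - Hyy g (x,y))) \<longlongrightarrow> Lm) (at 0)"
      using D3yyy_conv[OF Hyy_C1] by blast
    moreover have "onorm (\<lambda>v. (Hyy g (x, y + t *\<^sub>R vv) - Hyy g (x,y)) *v v) \<le> Qg * (\<bar>t\<bar> * norm vv)" for t
    proof -
      have "dist (x, y + t *\<^sub>R vv) (x,y) = \<bar>t\<bar> * norm vv" by (simp add: dist_norm norm_Pair)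
      thus ?thesis using Hyy_lip[rule_format, of "(x, y + t *\<^sub>R vv)" "(x,y)"] by simp
    qed
    ultimately show ?thesis unfolding D3yyy_def by (rule D3_bound)
  qed
  have dy: "norm (snd d) \<le> Mf" using Df_vals d by (metis norm_snd_le prod.collapse order_trans)
  have b1: "\<beta> \<ge> 8*Mf*Qg/\<mu>^3" using beta by simp
  have p35: "\<mu> powr 3.5 = \<mu>^3 * sqrt \<mu>"
  proof -
    have "\<mu> powr 3.5 = \<mu> powr (3 + 1/2)" by simp
    also have "\<dots> = \<mu> powr 3 * \<mu> powr (1/2)" by (rule powr_add)
    also have "\<dots> = \<mu>^3 * sqrt \<mu>" using pos(2) by (simp add: powr_half_sqrt powr_realpow)
    finally show ?thesis .
  qed
  have b2: "\<beta> \<ge> 4*Mf*Qg*Lg/(\<mu>^3 * sqrt \<mu>)" using beta p35 by simp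
  have main: "min (\<mu>\<^sup>2/(4*Lg\<^sup>2)) (\<mu>/4) * (norm (fst d - (B ** matrix_inv H) *v snd d,
             - (transpose (B ** matrix_inv H) *v (fst d - (B ** matrix_inv H) *v snd d)) + \<beta> *\<^sub>R G))\<^sup>2
         \<le> (fst d + (- (B ** matrix_inv H) + D3xyy g x y vv ** matrix_inv H) *v snd d + \<beta> *\<^sub>R (B *v G),
             (D3yyy g x y vv ** matrix_inv H) *v snd d + \<beta> *\<^sub>R (H *v G)) \<bullet>
            (fst d - (B ** matrix_inv H) *v snd d,
             - (transpose (B ** matrix_inv H) *v (fst d - (B ** matrix_inv H) *v snd d)) + \<beta> *\<^sub>R G)"
    by (rule abstract_ineq[OF pos(2,3,4,1) muL _ _ _ _ dy b1 b2])
       (use H_pd Bt Tx Ty in \<open>auto simp: H_def B_def vv_def\<close>)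
  have weq: "w = (fst d - (B ** matrix_inv H) *v snd d,
             - (transpose (B ** matrix_inv H) *v (fst d - (B ** matrix_inv H) *v snd d)) + \<beta> *\<^sub>R G)"
    unfolding wdef WTmap_def Wmap_def H_def B_def G_def by simp
  define zz where "zz = (fst d + (- (B ** matrix_inv H) + D3xyy g x y vv ** matrix_inv H) *v snd d + \<beta> *\<^sub>R (B *v G),
             (D3yyy g x y vv ** matrix_inv H) *v snd d + \<beta> *\<^sub>R (H *v G))"
  have zin: "zz \<in> Dh g Df \<beta> x y"
    unfolding Dh_def JAx_def JAy_def Let_def zz_def H_def B_def G_def vv_def
    by (rule image_eqI[OF _ d]) (simp add: case_prod_unfold)
  have bdd: "bdd_above ((\<lambda>z. z \<bullet> w) ` Dh g Df \<beta> x y)"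
  proof -
    have "compact ((\<lambda>z. z \<bullet> w) ` Dh g Df \<beta> x y)"
      unfolding Dh_def image_image case_prod_unfold
      by (intro compact_continuous_image continuous_intros cont_mv_snd) (use Df_vals in auto)
    thus ?thesis by (intro bounded_imp_bdd_above compact_imp_bounded)
  qed
  have "min (\<mu>^2 / (4 * Lg^2)) (\<mu> / 4) * (norm w)^2 \<le> zz \<bullet> w"
    using main unfolding weq[symmetric] zz_def .
  also have "\<dots> \<le> Sup ((\<lambda>z. z \<bullet> w) ` Dh g Df \<beta> x y)"
    by (rule cSup_upper[OF imageI[OF zin] bdd])
  finally show "Sup ((\<lambda>z. z \<bullet> w) ` Dh g Df \<beta> x y) \<ge> min (\<mu>^2 / (4 * Lg^2)) (\<mu> / 4) * (norm w)^2" .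
qed

end
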